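(* Let $\boldsymbol{\Sigma}=\boldsymbol{U}\boldsymbol{\Lambda}\boldsymbol{U}^\top\in\mathbb{R}^{p\times p}$ be positive semidefinite, $\boldsymbol{\beta}\in\mathbb{R}^p$, $r\le k$, and $S_k\in\mathbb{R}^{p\times k}$. Write $\boldsymbol{U}=[\boldsymbol{U}_r\ \boldsymbol{U}_{p-r}]$, $\boldsymbol{\Lambda}=\mathrm{diag}(\boldsymbol{\Lambda}_r,\boldsymbol{\Lambda}_{p-r})$, $\boldsymbol{\Sigma}_{p-r}=\boldsymbol{U}_{p-r}\boldsymbol{\Lambda}_{p-r}\boldsymbol{U}_{p-r}^\top$, $\widetilde S_1=\boldsymbol{U}_r^\top S_k$, $\widetilde S_2=\boldsymbol{U}_{p-r}^\top S_k$, $\widetilde{\boldsymbol{\beta}}_1=\boldsymbol{U}_r^\top\boldsymbol{\beta}$, $\widetilde{\boldsymbol{\beta}}_2=\boldsymbol{U}_{p-r}^\top\boldsymbol{\beta}$, and assume $\widetilde S_1\widetilde S_1^\top$ and $\widetilde S_2^\top\boldsymbol{\Lambda}_{p-r}\widetilde S_2$ are invertible. Let $\boldsymbol{\xi}^*$ be a minimizer of $(\boldsymbol{\beta}-S_k\boldsymbol{\xi})^\top\boldsymbol{\Sigma}_{p-r}(\boldsymbol{\beta}-S_k\boldsymbol{\xi})$ over $\boldsymbol{\xi}\in\mathbb{R}^k$ subject to $\boldsymbol{U}_r^\top(\boldsymbol{\beta}-S_k\boldsymbol{\xi})=\boldsymbol{0}$. Then $(\boldsymbol{\beta}-S_k\boldsymbol{\xi}^*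 )^\top\boldsymbol{\Sigma}_{p-r}(\boldsymbol{\beta}-S_k\boldsymbol{\xi}^* )\le 2L_1+2L_2$, where $$L_1=\frac{\|\widetilde S_2^\top\boldsymbol{\Lambda}_{p-r}\widetilde S_2\|_2}{\lambda_{\min}(\widetilde S_1\widetilde S_1^\top)}\|\widetilde{\boldsymbol{\beta}}_1\|_2^2,\qquad L_2=\Big(1+\kappa(\widetilde S_2^\top\boldsymbol{\Lambda}_{p-r}\widetilde S_2)\,\kappa(\widetilde S_1\widetilde S_1^\top)\Big)\,\widetilde{\boldsymbol{\beta}}_2^\top\boldsymbol{\Lambda}_{p-r}\widetilde{\boldsymbol{\beta}}_2 .$$
   Context: $\boldsymbol{\Sigma}=\boldsymbol{U}\boldsymbol{\Lambda}\boldsymbol{U}^\top$ is the eigendecomposition with $\boldsymbol{U}$ orthogonal and $\boldsymbol{\Lambda}$ diagonal with nonincreasing diagonal entries; $\boldsymbol{U}_r\in\mathbb{R}^{p\times r}$ consists of the first $r$ columns, $\boldsymbol{\Lambda}_r\in\mathbb{R}^{r\times r}$ of the first $r$ eigenvalues. $\kappa(\boldsymbol{A})=\lambda_{\max}(\boldsymbol{A})/\lambda_{\min}(\boldsymbol{A})$ is the condition number and $\|\cdot\|_2$ the spectral norm. In the paper $S_k$ has i.i.d. $\mathcal{N}(0,1)$ entries, in which case the invertibility assumptions hold almost surely when $r\le k$ and $\boldsymbol{\Lambda}_{p-r}$ has at least $k$ positive entries. *)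

theory Defs
  imports "Jordan_Normal_Form.Matrix" "Jordan_Normal_Form.Char_Poly"
begin

definition vnorm :: "real vec \<Rightarrow> real" where
  "vnorm v = sqrt (v \<bullet> v)"

definition lambda_max :: "real mat \<Rightarrow> real" where
  "lambda_max A = Max {a. eigenvalue A a}"

definition lambda_min :: "real mat \<Rightarrow> real" where
  "lambda_min A = Min {a. eigenvalue A a}"

definition cond_num :: "real mat \<Rightarrow> real" where
  "cond_num A = lambda_max A / lambda_min A"

definition spec_norm :: "real mat \<Rightarrow> real" where
  "spec_norm A = Sup {vnorm (A *\<^sub>v x) | x. x \<in> carrier_vec (dim_col A) \<and> vnorm x = 1}"

definition psd :: "real mat \<Rightarrow> bool" where
  "psd A \<longleftrightarrow> A = transpose_mat A \<and> (\<forall>x \<in> carrier_vec (dim_row A). 0 \<le> x \<bullet> (A *\<^sub>v x))"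

definition first_cols :: "nat \<Rightarrow> real mat \<Rightarrow> real mat" where
  "first_cols r U = mat (dim_row U) r (\<lambda>(i,j). U $$ (i,j))"

definition last_cols :: "nat \<Rightarrow> real mat \<Rightarrow> real mat" where
  "last_cols r U = mat (dim_row U) (dim_col U - r) (\<lambda>(i,j). U $$ (i, r + j))"

definition lower_block :: "nat \<Rightarrow> real mat \<Rightarrow> real mat" where
  "lower_block r L = mat (dim_row L - r) (dim_col L - r) (\<lambda>(i,j). L $$ (r + i, r + j))"

end

theory Submission imports Defs begin
lemma quad_disc:
  fixes a b c :: real
  assumes h: "\<And>t. 0 \<le> a - 2*t*b + t^2*c" and c0: "c \<ge> 0"
  shows "b^2 \<le> a*c"
proof (cases "c = 0")
  case True
  have "b = 0"
  proof (rule ccontr)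
    assume b: "b \<noteq> 0"
    have "0 \<le> a - 2*((a+1)/(2*b))*b" using h[of "(a+1)/(2*b)"] True by simp
    also have "\<dots> = -1" using b by (simp add: field_simps)
    finally show False by simp
  qed
  then show ?thesis using True by simp
next
  case False
  with c0 have c: "c > 0" by simp
  have "0 \<le> a - 2*(b/c)*b + (b/c)^2*c" by (rule h)
  also have "\<dots> = a - b^2/c" using c by (simp add: field_simps power2_eq_square)
  finally have "b^2/c \<le> a" by simp
  thus ?thesis using c by (simp add: field_simps mult.commute)
qed

lemma sprod_sum: "(x::real vec) \<in> carrier_vec n \<Longrightarrow> y \<in> carrier_vec n \<Longrightarrow> x \<bullet> y = (\<Sum>i<n. x$i * y$i)"
  unfolding scalar_prod_def by (simp add: atLeast0LessThan)

lemma bil_sum: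
  assumes A: "(A::real mat) \<in> carrier_mat n n" and x: "x \<in> carrier_vec n" and y: "y \<in> carrier_vec n"
  shows "x \<bullet> (A *\<^sub>v y) = (\<Sum>i<n. \<Sum>j<n. A$$(i,j) * x$i * y$j)"
proof -
  have "x \<bullet> (A *\<^sub>v y) = (\<Sum>i<n. x$i * (A *\<^sub>v y)$i)" using A x y by (simp add: sprod_sum)
  also have "\<dots> = (\<Sum>i<n. x$i * (\<Sum>j<n. A$$(i,j) * y$j))"
    using A y by (intro sum.cong refl) (simp add: sprod_sum row_def)
  also have "\<dots> = (\<Sum>i<n. \<Sum>j<n. A$$(i,j) * x$i * y$j)"
    by (simp add: sum_distrib_left mult.assoc mult.left_commute)
  finally show ?thesis .
qed

lemma self_sprod_nonneg: "(x::real vec) \<bullet> x \<ge> 0"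
  unfolding scalar_prod_def by (intro sum_nonneg) simp

lemma self_sprod_pos: assumes "(x::real vec) \<in> carrier_vec n" "x \<noteq> 0\<^sub>v n" shows "x \<bullet> x > 0"
proof -
  from assms obtain i where i: "i < n" "x$i \<noteq> 0" by (metis eq_vecI carrier_vecD index_zero_vec(1) index_zero_vec(2))
  have "x$i * x$i \<le> x \<bullet> x" using assms i unfolding scalar_prod_def
    by (intro member_le_sum[where f="\<lambda>j. x$j * x$j"]) auto
  moreover have "x$i * x$i > 0" using i(2) by (auto simp: zero_less_mult_iff linorder_neq_iff)
  ultimately show ?thesis by linarith
qed

lemma comp_sq_le: assumes "(x::real vec) \<in> carrier_vec n" "i < n" shows "x$i * x$i \<le> x \<bullet> x"
  using assms unfolding scalar_prod_def by (intro member_le_sum[where f="\<lambda>j. x$j * x$j"]) auto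

lemma quad_abs_bound:
  assumes A: "(A::real mat) \<in> carrier_mat n n" and x: "x \<in> carrier_vec n"
  shows "\<bar>x \<bullet> (A *\<^sub>v x)\<bar> \<le> (\<Sum>i<n. \<Sum>j<n. \<bar>A$$(i,j)\<bar>) * (x \<bullet> x)"
proof -
  have xy: "\<bar>x$i * x$j\<bar> \<le> x \<bullet> x" if "i < n" "j < n" for i j
  proof -
    have sq: "0 \<le> (\<bar>x$i\<bar> - \<bar>x$j\<bar>)^2" by simp
    have "\<bar>x$i * x$j\<bar> \<le> (x$i*x$i + x$j*x$j)/2"
      using sq unfolding power2_eq_square abs_mult by (simp add: algebra_simps abs_mult_self_eq)
    also have "\<dots> \<le> x \<bullet> x" using comp_sq_le[OF x that(1)] comp_sq_le[OF x that(2)] by simp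
    finally show ?thesis .
  qed
  have "\<bar>x \<bullet> (A *\<^sub>v x)\<bar> \<le> (\<Sum>i<n. \<Sum>j<n. \<bar>A$$(i,j) * x$i * x$j\<bar>)"
    unfolding bil_sum[OF A x x] by (rule order.trans[OF sum_abs sum_mono], rule sum_abs)
  also have "\<dots> \<le> (\<Sum>i<n. \<Sum>j<n. \<bar>A$$(i,j)\<bar> * (x \<bullet> x))"
    by (intro sum_mono) (metis abs_mult abs_ge_zero mult.assoc mult_left_mono xy lessThan_iff)
  also have "\<dots> = (\<Sum>i<n. \<Sum>j<n. \<bar>A$$(i,j)\<bar>) * (x \<bullet> x)" by (simp add: sum_distrib_right)
  finally show ?thesis .
qed

lemma cs_vec: assumes "(x::real vec) \<in> carrier_vec n" "y \<in> carrier_vec n"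
  shows "(x \<bullet> y)^2 \<le> (x \<bullet> x) * (y \<bullet> y)"
proof (rule quad_disc)
  fix t :: real
  have "0 \<le> (\<Sum>i<n. (x$i - t * y$i)^2)" by (intro sum_nonneg) simp
  also have "\<dots> = (x \<bullet> x) - 2*t*(x \<bullet> y) + t^2*(y \<bullet> y)"
    using assms unfolding sprod_sum[OF assms(1) assms(1)] sprod_sum[OF assms(1) assms(2)] sprod_sum[OF assms(2) assms(2)]
    by (simp add: power2_eq_square algebra_simps sum.distrib sum_subtractf sum_distrib_left)
  finally show "0 \<le> (x \<bullet> x) - 2*t*(x \<bullet> y) + t^2*(y \<bullet> y)" .
qed (rule self_sprod_nonneg)

lemma sym_bil:
  assumes N: "(N::real mat) \<in> carrier_mat n n" and sym: "transpose_mat N = N"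
    and y: "y \<in> carrier_vec n" and z: "z \<in> carrier_vec n"
  shows "z \<bullet> (N *\<^sub>v y) = y \<bullet> (N *\<^sub>v z)"
proof -
  have "z \<bullet> (N *\<^sub>v y) = (transpose_mat N *\<^sub>v z) \<bullet> y"
    using transpose_vec_mult_scalar[OF N y z] by simp
  also have "\<dots> = y \<bullet> (N *\<^sub>v z)" unfolding sym using N y z by (intro comm_scalar_prod[of _ n]) auto
  finally show ?thesis .
qed

lemma psd_cs:
  assumes N: "(N::real mat) \<in> carrier_mat n n" and sym: "transpose_mat N = N"
    and psd: "\<forall>w\<in>carrier_vec n. 0 \<le> w \<bullet> (N *\<^sub>v w)" and y: "y \<in> carrier_vec n" and z: "z \<in> carrier_vec n"
  shows "(y \<bullet> (N *\<^sub>v z))^2 \<le> (y \<bullet> (N *\<^sub>v y)) * (z \<bullet> (N *\<^sub>v z))"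
proof (rule quad_disc)
  fix t :: real
  have w: "y - t \<cdot>\<^sub>v z \<in> carrier_vec n" using y z by simp
  have Nw: "N *\<^sub>v (y - t \<cdot>\<^sub>v z) = N *\<^sub>v y - t \<cdot>\<^sub>v (N *\<^sub>v z)"
    using N y z by (simp add: mult_minus_distrib_mat_vec mult_mat_vec)
  have "(y - t \<cdot>\<^sub>v z) \<bullet> (N *\<^sub>v (y - t \<cdot>\<^sub>v z))
      = y \<bullet> (N *\<^sub>v y) - t * (y \<bullet> (N *\<^sub>v z)) - t * (z \<bullet> (N *\<^sub>v y)) + t*t*(z \<bullet> (N *\<^sub>v z))"
    unfolding Nw using N y z
    by (simp add: minus_scalar_prod_distrib[of _ n] scalar_prod_minus_distrib[of _ n] algebra_simps)
  also have "\<dots> = y \<bullet> (N *\<^sub>v y) - 2*t*(y \<bullet> (N *\<^sub>v z)) + t^2*(z \<bullet> (N *\<^sub>v z))"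
    using sym_bil[OF N sym y z] by (simp add: power2_eq_square)
  finally show "0 \<le> y \<bullet> (N *\<^sub>v y) - 2*t*(y \<bullet> (N *\<^sub>v z)) + t^2*(z \<bullet> (N *\<^sub>v z))"
    using psd w by metis
qed (use psd z in auto)

lemma rayleigh_eig:
  assumes M: "(M::real mat) \<in> carrier_mat n n" and sym: "transpose_mat M = M" and n: "0 < n"
  shows "\<exists>\<mu>. eigenvalue M \<mu> \<and> (\<forall>y\<in>carrier_vec n. \<mu> * (y \<bullet> y) \<le> y \<bullet> (M *\<^sub>v y))"
proof -
  define R where "R = {y \<bullet> (M *\<^sub>v y) / (y \<bullet> y) | y. y \<in> carrier_vec n \<and> y \<noteq> 0\<^sub>v n}"
  define C where "C = (\<Sum>i<n. \<Sum>j<n. \<bar>M$$(i,j)\<bar>)"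
  have e0: "unit_vec n 0 \<in> carrier_vec n" "unit_vec n 0 \<noteq> 0\<^sub>v n"
    using n by (auto simp: unit_vec_def vec_eq_iff)
  have Rne: "R \<noteq> {}" unfolding R_def using e0 by blast
  have Rbdd: "bdd_below R" unfolding bdd_below_def
  proof (intro exI ballI)
    fix q assume "q \<in> R"
    then obtain y where y: "y \<in> carrier_vec n" "y \<noteq> 0\<^sub>v n" and q: "q = y \<bullet> (M *\<^sub>v y) / (y \<bullet> y)"
      unfolding R_def by blast
    have pos: "y \<bullet> y > 0" by (rule self_sprod_pos[OF y])
    have "-C * (y \<bullet> y) \<le> y \<bullet> (M *\<^sub>v y)" using quad_abs_bound[OF M y(1)] unfolding C_def by linarith
    thus "-C \<le> q" unfolding q using pos by (simp add: field_simps)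
  qed
  define \<mu> where "\<mu> = Inf R"
  have low: "\<mu> * (y \<bullet> y) \<le> y \<bullet> (M *\<^sub>v y)" if y: "y \<in> carrier_vec n" for y
  proof (cases "y = 0\<^sub>v n")
    case True thus ?thesis using M by simp
  next
    case False
    have pos: "y \<bullet> y > 0" by (rule self_sprod_pos[OF y False])
    have "\<mu> \<le> y \<bullet> (M *\<^sub>v y) / (y \<bullet> y)" unfolding \<mu>_def
      by (rule cInf_lower[OF _ Rbdd]) (use y False in \<open>auto simp: R_def\<close>)
    thus ?thesis using pos by (simp add: field_simps)
  qed
  have "eigenvalue M \<mu>"
  proof (rule ccontr)
    assume ne: "\<not> eigenvalue M \<mu>"
    define N where "N = char_matrix M \<mu>"
    have N: "N \<in> carrier_mat n n" unfolding N_def using M by simp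
    have dN: "det N \<noteq> 0" using ne eigenvalue_det[OF M] unfolding N_def by simp
    from det_non_zero_imp_unit[OF N dN, of "()"]
    obtain Q where Q: "Q \<in> carrier_mat n n" and QN: "N * Q = 1\<^sub>m n"
      unfolding Units_def ring_mat_def by auto
    have Nv: "N *\<^sub>v w = M *\<^sub>v w - \<mu> \<cdot>\<^sub>v w" if "w \<in> carrier_vec n" for w
      
      proof -
        have I: "((-\<mu>) \<cdot>\<^sub>m 1\<^sub>m n) *\<^sub>v w = (-\<mu>) \<cdot>\<^sub>v w"
          using that by (intro eq_vecI) auto
        show ?thesis using M that unfolding N_def char_matrix_def
          by (simp add: add_mult_distrib_mat_vec[of _ n n] I minus_add_uminus_vec[of _ n])
             (intro eq_vecI, auto)
      qed
    have Nq: "w \<bullet> (N *\<^sub>v w) = w \<bullet> (M *\<^sub>v w) - \<mu> * (w \<bullet> w)" if w: "w \<in> carrier_vec n" for w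
      unfolding Nv[OF w] using M w by (simp add: scalar_prod_minus_distrib[of _ n])
    have Nsym: "transpose_mat N = N" unfolding N_def char_matrix_def using M sym
      by (intro eq_matI) (auto, metis index_transpose_mat(1) carrier_matD)
    have Npsd: "\<forall>w\<in>carrier_vec n. 0 \<le> w \<bullet> (N *\<^sub>v w)" using Nq low by simp
    define D where "D = (\<Sum>i<n. \<Sum>j<n. \<bar>Q$$(i,j)\<bar>) + 1"
    have D0: "D > 0" unfolding D_def by (smt (verit) sum_nonneg abs_ge_zero)
    have big: "\<mu> + 1/D \<le> q" if "q \<in> R" for q
    proof -
      from that obtain y where y: "y \<in> carrier_vec n" "y \<noteq> 0\<^sub>v n" and q: "q = y \<bullet> (M *\<^sub>v y) / (y \<bullet> y)"
        unfolding R_def by blast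
      have pos: "y \<bullet> y > 0" by (rule self_sprod_pos[OF y])
      define z where "z = Q *\<^sub>v y"
      have z: "z \<in> carrier_vec n" unfolding z_def using Q y by simp
      have Nz: "N *\<^sub>v z = y" unfolding z_def using N Q y QN
        by (metis assoc_mult_mat_vec one_mult_mat_vec)
      have zNz: "z \<bullet> (N *\<^sub>v z) \<le> D * (y \<bullet> y)"
      proof -
        have "z \<bullet> (N *\<^sub>v z) = y \<bullet> (Q *\<^sub>v y)" unfolding Nz unfolding z_def
          using Q y by (intro comm_scalar_prod[of _ n]) auto
        also have "\<dots> \<le> (D - 1) * (y \<bullet> y)" using quad_abs_bound[OF Q y(1)] unfolding D_def by simp
        also have "\<dots> \<le> D * (y \<bullet> y)" using pos by (simp add: algebra_simps)
        finally show ?thesis .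
      qed
      have "(y \<bullet> y)^2 \<le> (y \<bullet> (N *\<^sub>v y)) * (z \<bullet> (N *\<^sub>v z))"
        using psd_cs[OF N Nsym Npsd y(1) z] unfolding Nz .
      also have "\<dots> \<le> (y \<bullet> (N *\<^sub>v y)) * (D * (y \<bullet> y))"
        using zNz Npsd y(1) by (intro mult_left_mono) auto
      finally have "(y \<bullet> y) * (y \<bullet> y) \<le> ((y \<bullet> (N *\<^sub>v y)) * D) * (y \<bullet> y)"
        by (simp add: power2_eq_square algebra_simps)
      hence "y \<bullet> y \<le> (y \<bullet> (N *\<^sub>v y)) * D" using pos by simp
      hence "(y \<bullet> y) / D \<le> y \<bullet> (N *\<^sub>v y)" using D0 by (simp add: field_simps)
      hence "\<mu> * (y \<bullet> y) + (y \<bullet> y) / D \<le> y \<bullet> (M *\<^sub>v y)" unfolding Nq[OF y(1)] by simp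
      thus ?thesis unfolding q using pos D0 by (simp add: field_simps)
    qed
    have "\<mu> + 1/D \<le> \<mu>" unfolding \<mu>_def[symmetric] using cInf_greatest[OF Rne big] unfolding \<mu>_def .
    with D0 show False by simp
  qed
  with low show ?thesis by blast
qed


lemma eig_finite: assumes A: "(A::real mat) \<in> carrier_mat n n" shows "finite {a. eigenvalue A a}"
proof -
  have "char_poly A \<noteq> 0" using degree_monic_char_poly[OF A] by auto
  hence "finite {a. poly (char_poly A) a = 0}" by (rule poly_roots_finite)
  thus ?thesis using eigenvalue_root_char_poly[OF A] by simp
qed

lemma eig_nonneg:
  assumes A: "(A::real mat) \<in> carrier_mat n n" and psd: "\<forall>w\<in>carrier_vec n. 0 \<le> w \<bullet> (A *\<^sub>v w)"
    and e: "eigenvalue A a"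
  shows "0 \<le> a"
proof -
  from e obtain v where v: "v \<in> carrier_vec n" "v \<noteq> 0\<^sub>v n" "A *\<^sub>v v = a \<cdot>\<^sub>v v"
    unfolding eigenvalue_def eigenvector_def using A by auto
  have "v \<bullet> (A *\<^sub>v v) = a * (v \<bullet> v)" using v by simp
  moreover have "v \<bullet> v > 0" by (rule self_sprod_pos[OF v(1,2)])
  moreover have "0 \<le> v \<bullet> (A *\<^sub>v v)" using psd v(1) by blast
  ultimately show ?thesis by (simp add: zero_le_mult_iff)
qed

lemma Max_Min_empty: "Max ({}::real set) = Min {}"
  by (simp add: Max.eq_fold' Min.eq_fold')

lemma cond_nonneg:
  assumes A: "(A::real mat) \<in> carrier_mat n n" and psd: "\<forall>w\<in>carrier_vec n. 0 \<le> w \<bullet> (A *\<^sub>v w)"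
  shows "0 \<le> cond_num A"
proof (cases "{a. eigenvalue A a} = {}")
  case True
  show ?thesis unfolding cond_num_def lambda_max_def lambda_min_def True Max_Min_empty
    by (cases "Min ({}::real set) = 0") auto
next
  case False
  have f: "finite {a. eigenvalue A a}" by (rule eig_finite[OF A])
  have "Max {a. eigenvalue A a} \<in> {a. eigenvalue A a}" "Min {a. eigenvalue A a} \<in> {a. eigenvalue A a}"
    using Max_in[OF f False] Min_in[OF f False] by auto
  hence "0 \<le> lambda_max A" "0 \<le> lambda_min A" unfolding lambda_max_def lambda_min_def
    using eig_nonneg[OF A psd] by auto
  thus ?thesis unfolding cond_num_def by simp
qed

lemma lmin_bound:
  assumes M: "(M::real mat) \<in> carrier_mat n n" and sym: "transpose_mat M = M" and n: "0 < n"
    and y: "y \<in> carrier_vec n"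
  shows "lambda_min M * (y \<bullet> y) \<le> y \<bullet> (M *\<^sub>v y)"
proof -
  obtain \<mu> where e: "eigenvalue M \<mu>" and low: "\<forall>y\<in>carrier_vec n. \<mu> * (y \<bullet> y) \<le> y \<bullet> (M *\<^sub>v y)"
    using rayleigh_eig[OF M sym n] by blast
  have "lambda_min M \<le> \<mu>" unfolding lambda_min_def using eig_finite[OF M] e by (intro Min_le) auto
  hence "lambda_min M * (y \<bullet> y) \<le> \<mu> * (y \<bullet> y)" using self_sprod_nonneg by (intro mult_right_mono) auto
  also have "\<dots> \<le> y \<bullet> (M *\<^sub>v y)" using low y by blast
  finally show ?thesis .
qed

lemma lmin_pos:
  assumes M: "(M::real mat) \<in> carrier_mat n n" and sym: "transpose_mat M = M" and n: "0 < n"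
    and psd: "\<forall>w\<in>carrier_vec n. 0 \<le> w \<bullet> (M *\<^sub>v w)" and inv: "invertible_mat M"
  shows "0 < lambda_min M"
proof -
  obtain \<mu> where e: "eigenvalue M \<mu>"
    using rayleigh_eig[OF M sym n] by blast
  have f: "finite {a. eigenvalue M a}" by (rule eig_finite[OF M])
  have ne: "{a. eigenvalue M a} \<noteq> {}" using e by auto
  have mem: "eigenvalue M (lambda_min M)" unfolding lambda_min_def using Min_in[OF f ne] by simp
  have ge: "0 \<le> lambda_min M" by (rule eig_nonneg[OF M psd mem])
  have "lambda_min M \<noteq> 0"
  proof
    assume z: "lambda_min M = 0"
    from mem[unfolded z] obtain v where v: "v \<in> carrier_vec n" "v \<noteq> 0\<^sub>v n" and Mv0: "M *\<^sub>v v = 0 \<cdot>\<^sub>v v"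
      unfolding eigenvalue_def eigenvector_def using M by auto
    have Mv: "M *\<^sub>v v = 0\<^sub>v n" unfolding Mv0 using v by (intro eq_vecI) auto
    from inv obtain B where BM: "B * M = 1\<^sub>m (dim_row B)" and MB: "M * B = 1\<^sub>m (dim_row M)"
      unfolding invertible_mat_def inverts_mat_def by auto
    have dB: "B \<in> carrier_mat n n" using BM MB M
      by (metis carrier_matD carrier_matI index_mult_mat(2,3) index_one_mat(2,3))
    have "v = (B * M) *\<^sub>v v" using BM dB v by simp
    also have "\<dots> = B *\<^sub>v (M *\<^sub>v v)" using dB M v by simp
    also have "\<dots> = 0\<^sub>v n" unfolding Mv using dB by (intro eq_vecI) auto
    finally show False using v by simp
  qed
  with ge show ?thesis by simp
qed

lemma vnorm_sq: "(vnorm x)^2 = x \<bullet> x"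
  unfolding vnorm_def by (metis real_sqrt_pow2 self_sprod_nonneg)

lemma vnorm_nonneg: "0 \<le> vnorm x" unfolding vnorm_def using self_sprod_nonneg[of x] by simp

lemma vnorm_smult: assumes "x \<in> carrier_vec n" shows "vnorm (c \<cdot>\<^sub>v x) = \<bar>c\<bar> * vnorm x"
proof -
  have "(c \<cdot>\<^sub>v x) \<bullet> (c \<cdot>\<^sub>v x) = c^2 * (x \<bullet> x)" using assms by (simp add: power2_eq_square)
  thus ?thesis unfolding vnorm_def by (simp add: real_sqrt_mult)
qed

lemma cs_vnorm: assumes "(x::real vec) \<in> carrier_vec n" "y \<in> carrier_vec n"
  shows "\<bar>x \<bullet> y\<bar> \<le> vnorm x * vnorm y"
proof -
  have "sqrt ((x \<bullet> y)^2) \<le> sqrt ((x \<bullet> x) * (y \<bullet> y))" using cs_vec[OF assms] by (rule real_sqrt_le_mono)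
  thus ?thesis unfolding vnorm_def by (simp add: real_sqrt_mult)
qed

lemma spec_bdd:
  assumes A: "(A::real mat) \<in> carrier_mat n n"
  shows "bdd_above {vnorm (A *\<^sub>v x) | x. x \<in> carrier_vec (dim_col A) \<and> vnorm x = 1}"
proof -
  define C where "C = (\<Sum>i<n. \<Sum>j<n. \<bar>(transpose_mat A * A)$$(i,j)\<bar>)"
  show ?thesis unfolding bdd_above_def
  proof (intro exI allI impI ballI)
    fix q assume "q \<in> {vnorm (A *\<^sub>v x) | x. x \<in> carrier_vec (dim_col A) \<and> vnorm x = 1}"
    then obtain x where x: "x \<in> carrier_vec n" "vnorm x = 1" and q: "q = vnorm (A *\<^sub>v x)" using A by auto
    have xx: "x \<bullet> x = 1" using vnorm_sq[of x] x by simp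
    have "(A *\<^sub>v x) \<bullet> (A *\<^sub>v x) = (transpose_mat A *\<^sub>v (A *\<^sub>v x)) \<bullet> x"
      using transpose_vec_mult_scalar[OF A x(1), of "A *\<^sub>v x"] A x by simp
    also have "\<dots> = x \<bullet> ((transpose_mat A * A) *\<^sub>v x)" using A x
      by (subst comm_scalar_prod[of _ n]) auto
    also have "\<dots> \<le> C" using quad_abs_bound[of "transpose_mat A * A" n x] A x xx unfolding C_def by auto
    finally have "q^2 \<le> C" unfolding q vnorm_sq .
    thus "q \<le> sqrt C" using real_le_rsqrt by blast
  qed
qed

lemma spec_bound:
  assumes A: "(A::real mat) \<in> carrier_mat n n" and x: "x \<in> carrier_vec n"
  shows "vnorm (A *\<^sub>v x) \<le> spec_norm A * vnorm x"
proof (cases "x = 0\<^sub>v n")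
  case True
  have "A *\<^sub>v x = 0\<^sub>v n" unfolding True using A by (intro eq_vecI) auto
  thus ?thesis using True by (simp add: vnorm_def)
next
  case False
  have pos: "vnorm x > 0" using self_sprod_pos[OF x False] unfolding vnorm_def by simp
  define x' where "x' = (1 / vnorm x) \<cdot>\<^sub>v x"
  have x': "x' \<in> carrier_vec (dim_col A)" "vnorm x' = 1" unfolding x'_def using x A pos
    by (auto simp: vnorm_smult[OF x])
  have eq: "vnorm (A *\<^sub>v x') = vnorm (A *\<^sub>v x) / vnorm x" unfolding x'_def
    using A x pos by (simp add: mult_mat_vec vnorm_smult[of _ n])
  have "vnorm (A *\<^sub>v x') \<le> spec_norm A" unfolding spec_norm_def
    by (rule cSup_upper[OF _ spec_bdd[OF A]]) (use x' in blast)
  thus ?thesis unfolding eq using pos by (simp add: field_simps)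
qed

lemma spec_nonneg:
  assumes A: "(A::real mat) \<in> carrier_mat n n" and n: "0 < n"
  shows "0 \<le> spec_norm A"
proof -
  have e: "unit_vec n 0 \<in> carrier_vec n" "vnorm (unit_vec n 0) = 1"
    using n by (auto simp: vnorm_def)
  have "vnorm (A *\<^sub>v unit_vec n 0) \<le> spec_norm A" unfolding spec_norm_def
    by (rule cSup_upper[OF _ spec_bdd[OF A]]) (use e A in auto)
  thus ?thesis using vnorm_nonneg order.trans by blast
qed

lemma spec_quad:
  assumes A: "(A::real mat) \<in> carrier_mat n n" and x: "x \<in> carrier_vec n"
  shows "x \<bullet> (A *\<^sub>v x) \<le> spec_norm A * (x \<bullet> x)"
proof -
  have Ax: "A *\<^sub>v x \<in> carrier_vec n" using A x by simp
  have "x \<bullet> (A *\<^sub>v x) \<le> vnorm x * vnorm (A *\<^sub>v x)"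
    using cs_vnorm[OF x Ax] abs_ge_self order.trans by blast
  also have "\<dots> \<le> vnorm x * (spec_norm A * vnorm x)"
    by (intro mult_left_mono spec_bound[OF A x] vnorm_nonneg)
  also have "\<dots> = spec_norm A * (x \<bullet> x)" using vnorm_sq[of x] by (simp add: power2_eq_square)
  finally show ?thesis .
qed


lemma sandwich:
  assumes A: "(A::real mat) \<in> carrier_mat p m" and L: "L \<in> carrier_mat m m" and v: "v \<in> carrier_vec p"
  shows "v \<bullet> ((A * L * transpose_mat A) *\<^sub>v v) = (transpose_mat A *\<^sub>v v) \<bullet> (L *\<^sub>v (transpose_mat A *\<^sub>v v))"
proof -
  have AL: "A * L \<in> carrier_mat p m" using A L by simp
  have At: "transpose_mat A \<in> carrier_mat m p" using A by simp
  have "(A * L * transpose_mat A) *\<^sub>v v = (A * L) *\<^sub>v (transpose_mat A *\<^sub>v v)"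
    by (rule assoc_mult_mat_vec[OF AL At v])
  also have "\<dots> = A *\<^sub>v (L *\<^sub>v (transpose_mat A *\<^sub>v v))"
    by (rule assoc_mult_mat_vec[OF A L]) (use At v in simp)
  finally have "(A * L * transpose_mat A) *\<^sub>v v = A *\<^sub>v (L *\<^sub>v (transpose_mat A *\<^sub>v v))" .
  moreover have "(transpose_mat A *\<^sub>v v) \<bullet> (L *\<^sub>v (transpose_mat A *\<^sub>v v)) = v \<bullet> (A *\<^sub>v (L *\<^sub>v (transpose_mat A *\<^sub>v v)))"
    using A L v by (intro transpose_vec_mult_scalar[of A p m]) auto
  ultimately show ?thesis by simp
qed

lemma sandwich2:
  assumes A: "(A::real mat) \<in> carrier_mat m q" and L: "L \<in> carrier_mat m m" and v: "v \<in> carrier_vec q"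
  shows "v \<bullet> ((transpose_mat A * L * A) *\<^sub>v v) = (A *\<^sub>v v) \<bullet> (L *\<^sub>v (A *\<^sub>v v))"
  using sandwich[of "transpose_mat A" q m L v] A L v by simp

lemma diag_quad:
  assumes L: "(L::real mat) \<in> carrier_mat m m" and d: "\<And>i j. i < m \<Longrightarrow> j < m \<Longrightarrow> i \<noteq> j \<Longrightarrow> L$$(i,j) = 0"
    and w: "w \<in> carrier_vec m"
  shows "w \<bullet> (L *\<^sub>v w) = (\<Sum>i<m. L$$(i,i) * (w$i)^2)"
proof -
  have "w \<bullet> (L *\<^sub>v w) = (\<Sum>i<m. \<Sum>j<m. L$$(i,j) * w$i * w$j)" by (rule bil_sum[OF L w w])
  also have "\<dots> = (\<Sum>i<m. \<Sum>j<m. if j = i then L$$(i,i) * (w$i)^2 else 0)"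
    by (intro sum.cong refl) (auto simp: d power2_eq_square)
  also have "\<dots> = (\<Sum>i<m. L$$(i,i) * (w$i)^2)" by simp
  finally show ?thesis .
qed

lemma diag_two:
  assumes L: "(L::real mat) \<in> carrier_mat m m" and d: "\<And>i j. i < m \<Longrightarrow> j < m \<Longrightarrow> i \<noteq> j \<Longrightarrow> L$$(i,j) = 0"
    and nn: "\<And>i. i < m \<Longrightarrow> 0 \<le> L$$(i,i)"
    and u: "u \<in> carrier_vec m" and w: "w \<in> carrier_vec m"
  shows "(u - w) \<bullet> (L *\<^sub>v (u - w)) \<le> 2 * (u \<bullet> (L *\<^sub>v u)) + 2 * (w \<bullet> (L *\<^sub>v w))"
proof -
  have uw: "u - w \<in> carrier_vec m" using u w by simp
  have "(u - w) \<bullet> (L *\<^sub>v (u - w)) = (\<Sum>i<m. L$$(i,i) * ((u - w)$i)^2)"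
    by (rule diag_quad[OF L d uw])
  also have "\<dots> = (\<Sum>i<m. L$$(i,i) * (u$i - w$i)^2)"
    using u w by (intro sum.cong refl) auto
  also have "\<dots> \<le> (\<Sum>i<m. L$$(i,i) * (2*(u$i)^2 + 2*(w$i)^2))"
  proof (intro sum_mono mult_left_mono)
    fix i assume "i \<in> {..<m}"
    thus "0 \<le> L$$(i,i)" using nn by simp
    have "0 \<le> (u$i + w$i)^2" by simp
    thus "(u$i - w$i)^2 \<le> 2*(u$i)^2 + 2*(w$i)^2" by (simp add: power2_eq_square algebra_simps)
  qed
  also have "\<dots> = 2 * (\<Sum>i<m. L$$(i,i) * (u$i)^2) + 2 * (\<Sum>i<m. L$$(i,i) * (w$i)^2)"
    by (simp add: algebra_simps sum.distrib sum_distrib_left)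
  also have "\<dots> = 2 * (u \<bullet> (L *\<^sub>v u)) + 2 * (w \<bullet> (L *\<^sub>v w))"
    using diag_quad[OF L d u] diag_quad[OF L d w] by simp
  finally show ?thesis .
qed

lemma diag_psd:
  assumes L: "(L::real mat) \<in> carrier_mat m m" and d: "\<And>i j. i < m \<Longrightarrow> j < m \<Longrightarrow> i \<noteq> j \<Longrightarrow> L$$(i,j) = 0"
    and nn: "\<And>i. i < m \<Longrightarrow> 0 \<le> L$$(i,i)"
  shows "\<forall>w\<in>carrier_vec m. 0 \<le> w \<bullet> (L *\<^sub>v w)"
  using diag_quad[OF L d] nn by (auto intro!: sum_nonneg)

theorem lemma2:
  fixes p k r :: nat and Sigma U Lam S :: "real mat" and beta xi :: "real vec"
  assumes dims: "Sigma \<in> carrier_mat p p" "U \<in> carrier_mat p p" "Lam \<in> carrier_mat p p"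
      "S \<in> carrier_mat p k" "beta \<in> carrier_vec p"
    and psd: "psd Sigma"
    and eig: "Sigma = U * Lam * transpose_mat U"
    and orth: "transpose_mat U * U = 1\<^sub>m p" "U * transpose_mat U = 1\<^sub>m p"
    and diag: "diagonal_mat Lam"
    and nonincr: "\<And>i j. i \<le> j \<Longrightarrow> j < p \<Longrightarrow> Lam $$ (j,j) \<le> Lam $$ (i,i)"
    and rk: "r \<le> k" "r \<le> p"
    and inv1: "invertible_mat ((transpose_mat (first_cols r U) * S)
                 * transpose_mat (transpose_mat (first_cols r U) * S))"
    and inv2: "invertible_mat (transpose_mat (transpose_mat (last_cols r U) * S)
                 * lower_block r Lam * (transpose_mat (last_cols r U) * S))"
    and xi_dim: "xi \<in> carrier_vec k"
    and xi_feas: "transpose_mat (first_cols r U) *\<^sub>v (beta - S *\<^sub>v xi) = 0\<^sub>v r"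
    and xi_min: "\<And>z. z \<in> carrier_vec k \<Longrightarrow>
        transpose_mat (first_cols r U) *\<^sub>v (beta - S *\<^sub>v z) = 0\<^sub>v r \<Longrightarrow>
        (beta - S *\<^sub>v xi) \<bullet> ((last_cols r U * lower_block r Lam * transpose_mat (last_cols r U))
            *\<^sub>v (beta - S *\<^sub>v xi))
        \<le> (beta - S *\<^sub>v z) \<bullet> ((last_cols r U * lower_block r Lam * transpose_mat (last_cols r U))
            *\<^sub>v (beta - S *\<^sub>v z))"
  shows "let Ur = first_cols r U; Upr = last_cols r U; Lpr = lower_block r Lam;
             Sig_pr = Upr * Lpr * transpose_mat Upr;
             S1 = transpose_mat Ur * S; S2 = transpose_mat Upr * S;
             b1 = transpose_mat Ur *\<^sub>v beta; b2 = transpose_mat Upr *\<^sub>v beta;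
             M1 = S1 * transpose_mat S1; M2 = transpose_mat S2 * Lpr * S2;
             L1 = spec_norm M2 / lambda_min M1 * (vnorm b1)\<^sup>2;
             L2 = (1 + cond_num M2 * cond_num M1) * (b2 \<bullet> (Lpr *\<^sub>v b2))
         in (beta - S *\<^sub>v xi) \<bullet> (Sig_pr *\<^sub>v (beta - S *\<^sub>v xi)) \<le> 2 * L1 + 2 * L2"
proof -
  define Ur where "Ur = first_cols r U"
  define Upr where "Upr = last_cols r U"
  define Lpr where "Lpr = lower_block r Lam"
  define S1 where "S1 = transpose_mat Ur * S"
  define S2 where "S2 = transpose_mat Upr * S"
  define b1 where "b1 = transpose_mat Ur *\<^sub>v beta"
  define b2 where "b2 = transpose_mat Upr *\<^sub>v beta"
  define M1 where "M1 = S1 * transpose_mat S1"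
  define M2 where "M2 = transpose_mat S2 * Lpr * S2"
  define obj where "obj = (\<lambda>z. (beta - S *\<^sub>v z) \<bullet> ((Upr * Lpr * transpose_mat Upr) *\<^sub>v (beta - S *\<^sub>v z)))"
  have Ur: "Ur \<in> carrier_mat p r" unfolding Ur_def first_cols_def using dims by auto
  have Upr: "Upr \<in> carrier_mat p (p - r)" unfolding Upr_def last_cols_def using dims by auto
  have Lpr: "Lpr \<in> carrier_mat (p - r) (p - r)" unfolding Lpr_def lower_block_def using dims by auto
  have S1: "S1 \<in> carrier_mat r k" unfolding S1_def using Ur dims by auto
  have S2: "S2 \<in> carrier_mat (p - r) k" unfolding S2_def using Upr dims by auto
  have b1: "b1 \<in> carrier_vec r" unfolding b1_def using Ur dims by auto
  have b2: "b2 \<in> carrier_vec (p - r)" unfolding b2_def using Upr dims by auto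
  have M1: "M1 \<in> carrier_mat r r" unfolding M1_def using S1 by auto
  have M2: "M2 \<in> carrier_mat k k" unfolding M2_def using S2 Lpr by auto
  have Lamd: "Lam $$ (i,j) = 0" if "i < p" "j < p" "i \<noteq> j" for i j
    using diag that dims unfolding diagonal_mat_def by auto
  have Lam_nn: "0 \<le> Lam $$ (j,j)" if j: "j < p" for j
  proof -
    define e :: "real vec" where "e = unit_vec p j"
    have e: "e \<in> carrier_vec p" unfolding e_def by simp
    have Ue: "U *\<^sub>v e \<in> carrier_vec p" using dims e by simp
    have UtUe: "transpose_mat U *\<^sub>v (U *\<^sub>v e) = e"
    proof -
      have "transpose_mat U *\<^sub>v (U *\<^sub>v e) = (transpose_mat U * U) *\<^sub>v e"
        by (rule assoc_mult_mat_vec[symmetric]) (use dims e in auto)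
      thus ?thesis unfolding orth(1) using e by simp
    qed
    have "0 \<le> (U *\<^sub>v e) \<bullet> (Sigma *\<^sub>v (U *\<^sub>v e))" using psd Ue dims unfolding psd_def by auto
    also have "\<dots> = e \<bullet> (Lam *\<^sub>v e)" unfolding eig sandwich[OF dims(2,3) Ue] UtUe ..
    also have "\<dots> = Lam $$ (j,j)" unfolding e_def using j dims by simp
    finally show ?thesis .
  qed
  have Lprd: "Lpr $$ (i,j) = 0" if "i < p - r" "j < p - r" "i \<noteq> j" for i j
    unfolding Lpr_def lower_block_def using that dims Lamd by auto
  have Lpr_nn: "0 \<le> Lpr $$ (i,i)" if "i < p - r" for i
    unfolding Lpr_def lower_block_def using that dims Lam_nn by auto
  have Lpr_psd: "\<forall>w\<in>carrier_vec (p - r). 0 \<le> w \<bullet> (Lpr *\<^sub>v w)" by (rule diag_psd[OF Lpr Lprd Lpr_nn])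
  have M1_sym: "transpose_mat M1 = M1" unfolding M1_def using S1 by (simp add: transpose_mult[of _ r k])
  have M1_quad: "w \<bullet> (M1 *\<^sub>v w) = (transpose_mat S1 *\<^sub>v w) \<bullet> (transpose_mat S1 *\<^sub>v w)" if w: "w \<in> carrier_vec r" for w
  proof -
    have "(transpose_mat S1 *\<^sub>v w) \<bullet> (transpose_mat S1 *\<^sub>v w) = w \<bullet> (S1 *\<^sub>v (transpose_mat S1 *\<^sub>v w))"
      using S1 w by (intro transpose_vec_mult_scalar[of S1 r k]) auto
    thus ?thesis unfolding M1_def using S1 w by simp
  qed
  have M1_psd: "\<forall>w\<in>carrier_vec r. 0 \<le> w \<bullet> (M1 *\<^sub>v w)" using M1_quad self_sprod_nonneg by simp
  have M2_quad: "w \<bullet> (M2 *\<^sub>v w) = (S2 *\<^sub>v w) \<bullet> (Lpr *\<^sub>v (S2 *\<^sub>v w))" if w: "w \<in> carrier_vec k" for w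
    unfolding M2_def by (rule sandwich2[OF S2 Lpr w])
  have M2_psd: "\<forall>w\<in>carrier_vec k. 0 \<le> w \<bullet> (M2 *\<^sub>v w)"
    using M2_quad Lpr_psd S2 by simp
  from inv1[folded Ur_def, folded S1_def M1_def] obtain B where
    MB: "M1 * B = 1\<^sub>m (dim_row M1)" and BM: "B * M1 = 1\<^sub>m (dim_row B)"
    unfolding invertible_mat_def inverts_mat_def by auto
  have dcB: "dim_col B = r" using arg_cong[OF MB, of dim_col] M1 by simp
  have drB: "dim_row B = r" using arg_cong[OF BM, of dim_col] M1 by simp
  have B: "B \<in> carrier_mat r r" using dcB drB by auto
  define y where "y = B *\<^sub>v b1"
  have y: "y \<in> carrier_vec r" unfolding y_def using B b1 by simp
  have My: "M1 *\<^sub>v y = b1"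
  proof -
    have "M1 *\<^sub>v y = (M1 * B) *\<^sub>v b1" unfolding y_def
      by (rule assoc_mult_mat_vec[symmetric, OF M1 B b1])
    thus ?thesis unfolding MB using M1 b1 by simp
  qed
  define z where "z = transpose_mat S1 *\<^sub>v y"
  have z: "z \<in> carrier_vec k" unfolding z_def using S1 y by simp
  have Sz: "S1 *\<^sub>v z = b1"
  proof -
    have "S1 *\<^sub>v z = (S1 * transpose_mat S1) *\<^sub>v y" unfolding z_def
      by (rule assoc_mult_mat_vec[symmetric, OF S1 _ y]) (use S1 in simp)
    thus ?thesis using My unfolding M1_def by simp
  qed
  have Sz': "S *\<^sub>v z \<in> carrier_vec p" using dims z by simp
  have feas: "transpose_mat Ur *\<^sub>v (beta - S *\<^sub>v z) = 0\<^sub>v r"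
  proof -
    have "transpose_mat Ur *\<^sub>v (beta - S *\<^sub>v z) = b1 - S1 *\<^sub>v z"
      unfolding b1_def S1_def using Ur dims z
      by (simp add: mult_minus_distrib_mat_vec[of _ r p])
    thus ?thesis unfolding Sz using b1 by simp
  qed
  have step1: "obj xi \<le> obj z" unfolding obj_def Upr_def Lpr_def
    using xi_min[OF z feas[unfolded Ur_def]] .
  have Upr_v: "transpose_mat Upr *\<^sub>v (beta - S *\<^sub>v z) = b2 - S2 *\<^sub>v z"
    unfolding b2_def S2_def using Upr dims z
    by (simp add: mult_minus_distrib_mat_vec[of _ "p - r" p])
  have S2z: "S2 *\<^sub>v z \<in> carrier_vec (p - r)" using S2 z by simp
  define T1 where "T1 = (S2 *\<^sub>v z) \<bullet> (Lpr *\<^sub>v (S2 *\<^sub>v z))"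
  have step2: "obj z \<le> 2 * (b2 \<bullet> (Lpr *\<^sub>v b2)) + 2 * T1"
  proof -
    have "obj z = (b2 - S2 *\<^sub>v z) \<bullet> (Lpr *\<^sub>v (b2 - S2 *\<^sub>v z))"
    proof -
      have vc: "beta - S *\<^sub>v z \<in> carrier_vec p" using dims Sz' by simp
      show ?thesis unfolding obj_def sandwich[OF Upr Lpr vc] Upr_v ..
    qed
    also have "\<dots> \<le> 2 * (b2 \<bullet> (Lpr *\<^sub>v b2)) + 2 * T1" unfolding T1_def
      by (rule diag_two[OF Lpr Lprd Lpr_nn b2 S2z])
    finally show ?thesis .
  qed
  define a where "a = y \<bullet> b1"
  have zz: "z \<bullet> z = a"
  proof -
    have "(transpose_mat S1 *\<^sub>v y) \<bullet> z = y \<bullet> (S1 *\<^sub>v z)"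
      using S1 y z by (intro transpose_vec_mult_scalar[of S1 r k]) auto
    thus ?thesis unfolding a_def Sz by (simp add: z_def)
  qed
  have T1: "T1 \<le> spec_norm M2 * a"
    unfolding T1_def M2_quad[OF z, symmetric] zz[symmetric] by (rule spec_quad[OF M2 z])
  define L1 where "L1 = spec_norm M2 / lambda_min M1 * (vnorm b1)\<^sup>2"
  define L2 where "L2 = (1 + cond_num M2 * cond_num M1) * (b2 \<bullet> (Lpr *\<^sub>v b2))"
  have T1L1: "T1 \<le> L1"
  proof (cases "r = 0")
    case True
    have "a = 0" unfolding a_def using y b1 True by (simp add: scalar_prod_def)
    moreover have "vnorm b1 = 0" using b1 True by (simp add: vnorm_def scalar_prod_def)
    ultimately show ?thesis using T1 unfolding L1_def by simp
  next
    case False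
    hence r0: "0 < r" by simp
    have k0: "0 < k" using r0 rk by simp
    have lpos: "0 < lambda_min M1"
      by (rule lmin_pos[OF M1 M1_sym r0 M1_psd]) (use inv1 in \<open>simp add: M1_def S1_def Ur_def\<close>)
    have a0: "0 \<le> a" using zz self_sprod_nonneg[of z] by simp
    have la: "lambda_min M1 * (y \<bullet> y) \<le> a"
      using lmin_bound[OF M1 M1_sym r0 y] unfolding My a_def .
    have "a^2 \<le> (y \<bullet> y) * (b1 \<bullet> b1)" unfolding a_def by (rule cs_vec[OF y b1])
    also have "\<dots> \<le> (a / lambda_min M1) * (b1 \<bullet> b1)"
      using la lpos self_sprod_nonneg[of b1] by (intro mult_right_mono) (auto simp: field_simps)
    finally have "a * a \<le> a * ((b1 \<bullet> b1) / lambda_min M1)" by (simp add: power2_eq_square)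
    hence ab: "a \<le> (b1 \<bullet> b1) / lambda_min M1"
    proof (cases "a = 0")
      case True thus ?thesis using lpos self_sprod_nonneg[of b1] by simp
    next
      case False
      hence "0 < a" using a0 by simp
      thus ?thesis using \<open>a * a \<le> a * ((b1 \<bullet> b1) / lambda_min M1)\<close>
          mult_le_cancel_left_pos[of a a "(b1 \<bullet> b1) / lambda_min M1"] by blast
    qed
    have "T1 \<le> spec_norm M2 * ((b1 \<bullet> b1) / lambda_min M1)"
      using T1 spec_nonneg[OF M2 k0] ab by (meson mult_left_mono order.trans)
    also have "\<dots> = L1" unfolding L1_def vnorm_sq by simp
    finally show ?thesis .
  qed
  have L2: "b2 \<bullet> (Lpr *\<^sub>v b2) \<le> L2"
  proof -
    have "0 \<le> cond_num M2 * cond_num M1"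
      using cond_nonneg[OF M2 M2_psd] cond_nonneg[OF M1 M1_psd] by simp
    moreover have "0 \<le> b2 \<bullet> (Lpr *\<^sub>v b2)" using Lpr_psd b2 by simp
    ultimately have "0 \<le> (cond_num M2 * cond_num M1) * (b2 \<bullet> (Lpr *\<^sub>v b2))" by simp
    thus ?thesis unfolding L2_def by (simp add: distrib_right)
  qed
  have final: "obj xi \<le> 2 * L1 + 2 * L2" using step1 step2 T1L1 L2 by linarith
  show ?thesis using final
    unfolding Let_def obj_def L1_def L2_def M1_def M2_def S1_def S2_def b1_def b2_def Ur_def Upr_def Lpr_def .
qed

end
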